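(* Let $\omega\in(0,1)$, $P>0$, $A\in\mathbb{R}$, $\kappa\in(0,1)$, $T>0$. Let $f\in C([0,T],\mathcal{M}^{\mathrm{fin}}_+(\mathbb{R}))$ satisfy, for every $\psi\in C_b^1(\mathbb{R})$ and $t\in[0,T]$, $\int\psi\,f(dx,t)=\psi(A)+\int_0^t\int_{\mathbb{R}}\int_0^\infty\frac{P}{y^{1+\omega}}[\psi(x-y)-\psi(x)]\,dy\,f(dx,s)\,ds$, with $\operatorname{supp}f(\cdot,t)\subset(-\infty,A]$ and $f(\mathbb{R},t)=1$ for all $t$, and let $G(\cdot,t):=f(\cdot,t)\ast\varphi_\kappa$, which solves $\partial_tG(x,t)=P\int_0^\infty z^{-1-\omega}[G(x+z,t)-G(x,t)]\,dz$ with $G(\cdot,0)=\varphi_\kappa(\cdot-A)$. Then for any $\mu\in(0,1)$ there are constants $C,C_\mu,C_\omega$ (depending only on $\mu,\omega$) such that for all $t\in[0,T]$: (1) $\int_{-\infty}^{A-D}G(x,t)\,dx\le C\big(\frac{\kappa}{D}\big)^\mu+C\frac{Pt}{D^\omega}$ for all $D>0$; (2) $\int_{A-2}^A|x-A|\,G(x,t)\,dx\le C_\mu\kappa^\mu+C_\omega Pt$.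
   Context: $\varphi_\kappa$ denotes a non-negative, symmetric standard mollifier with $\operatorname{supp}\varphi_\kappa\subset[-\kappa,\kappa]$ and $\int\varphi_\kappa=1$. $\mathcal{M}^{\mathrm{fin}}_+(\mathbb{R})$ is the space of non-negative finite measures on $\mathbb{R}$; $C_b^1(\mathbb{R})$ denotes bounded $C^1$ functions with bounded derivative. *)

theory Defs
  imports "HOL-Analysis.Analysis"
begin

definition Cb1 :: "(real \<Rightarrow> real) \<Rightarrow> bool" where
  "Cb1 \<psi> \<longleftrightarrow> (\<exists>\<psi>'. (\<forall>x. (\<psi> has_real_derivative \<psi>' x) (at x))
      \<and> continuous_on UNIV \<psi>' \<and> bounded (range \<psi>) \<and> bounded (range \<psi>'))"

definition Cb :: "(real \<Rightarrow> real) \<Rightarrow> bool" where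
  "Cb \<psi> \<longleftrightarrow> continuous_on UNIV \<psi> \<and> bounded (range \<psi>)"

definition mollifier :: "real \<Rightarrow> (real \<Rightarrow> real) \<Rightarrow> bool" where
  "mollifier \<kappa> \<phi> \<longleftrightarrow> (\<forall>n x. (deriv ^^ n) \<phi> differentiable (at x))
      \<and> (\<forall>x. 0 \<le> \<phi> x) \<and> (\<forall>x. \<phi> (-x) = \<phi> x)
      \<and> (\<forall>x. \<bar>x\<bar> > \<kappa> \<longrightarrow> \<phi> x = 0)
      \<and> integrable lborel \<phi> \<and> (\<integral>x. \<phi> x \<partial>lborel) = 1"

definition conv_meas :: "real measure \<Rightarrow> (real \<Rightarrow> real) \<Rightarrow> real \<Rightarrow> real" where
  "conv_meas M \<phi> x = (\<integral>y. \<phi> (x - y) \<partial>M)"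

end

theory Submission
  imports Defs
begin

lemma arctan_lip: "\<bar>arctan a - arctan b\<bar> \<le> \<bar>a - b\<bar>"
proof -
  have key: "arctan q - arctan p \<le> q - p" if "p < q" for p q
  proof -
    obtain z where "p < z" "z < q" "arctan q - arctan p = (q - p) * inverse (1 + z\<^sup>2)"
      using MVT2[OF \<open>p < q\<close>, of arctan "\<lambda>z. inverse (1 + z\<^sup>2)"] DERIV_arctan by blast
    moreover have "inverse (1 + z\<^sup>2) \<le> 1" by (simp add: power2_eq_square inverse_le_1_iff add_pos_nonneg)
    ultimately show ?thesis using that by (simp add: mult_left_le)
  qed
  show ?thesis
  proof (cases a b rule: linorder_cases)
    case less then show ?thesis using key[OF less] arctan_monotone[OF less] by auto
  next
    case greater then show ?thesis using key[OF greater] arctan_monotone[OF greater] by auto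
  qed simp
qed

lemma arctan_lower: assumes "0 \<le> u" shows "u \<le> (1 + u\<^sup>2) * arctan u"
proof (cases "u = 0")
  case False
  then have u: "0 < u" using assms by simp
  define g where "g = (\<lambda>u. (1 + u\<^sup>2) * arctan u - u)"
  have d: "DERIV g z :> 2 * z * arctan z" for z
    unfolding g_def
    apply (rule derivative_eq_intros DERIV_arctan refl | simp)+
    using zero_le_square[of z] by (simp add: field_simps power2_eq_square add_nonneg_eq_0_iff)
  obtain z where "0 < z" "z < u" "g u - g 0 = (u - 0) * (2 * z * arctan z)"
    using MVT2[OF u, of g "\<lambda>z. 2 * z * arctan z"] d by blast
  moreover have "0 \<le> (u - 0) * (2 * z * arctan z)" using \<open>0<z\<close> u by simp
  ultimately have "0 \<le> g u - g 0" by linarith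
  then show ?thesis by (simp add: g_def)
qed simp

lemma nn_powr0: assumes "0 < D" "0 < \<omega>" "\<omega> < 1"
  shows "(\<integral>\<^sup>+y. ennreal (indicator {0..D} y * y powr (-\<omega>)) \<partial>lborel) = ennreal (D powr (1-\<omega>) / (1-\<omega>))"
proof -
  have "((\<lambda>y. y powr (-\<omega>)) has_integral (D powr (-\<omega>+1) / (-\<omega>+1))) {0..D}"
    using has_integral_powr_from_0[of "-\<omega>" D] assms by simp
  from nn_integral_has_integral_lebesgue[OF _ this]
  show ?thesis by (simp add: nn_integral_set_ennreal add.commute)
qed

lemma nn_powrinf: assumes "0 < D" "0 < \<omega>"
  shows "(\<integral>\<^sup>+y. ennreal (indicator {D..} y * y powr (-1-\<omega>)) \<partial>lborel) = ennreal (D powr (-\<omega>) / \<omega>)"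
proof -
  have "((\<lambda>y. y powr (-1-\<omega>)) has_integral (-(D powr (-1-\<omega>+1)) / (-1-\<omega>+1))) {D..}"
    using has_integral_powr_to_inf[of "-1-\<omega>" D] assms by simp
  from nn_integral_has_integral_lebesgue[OF _ this]
  show ?thesis by (simp add: nn_integral_set_ennreal)
qed

lemma inner_bound:
  fixes \<psi> :: "real \<Rightarrow> real"
  assumes "0 < D" "0 < \<omega>" "\<omega> < 1" "0 < P"
    and lip: "\<And>a b. \<bar>\<psi> a - \<psi> b\<bar> \<le> \<bar>a - b\<bar> / D"
    and bd: "\<And>a b. \<bar>\<psi> a - \<psi> b\<bar> \<le> pi"
  shows "\<bar>LBINT y:{0<..}. P / y powr (1 + \<omega>) * (\<psi> (x - y) - \<psi> x)\<bar>
           \<le> P * (1/(1-\<omega>) + pi/\<omega>) / D powr \<omega>"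
proof -
  define F where "F = (\<lambda>y. indicator {0<..} y *\<^sub>R (P / y powr (1 + \<omega>) * (\<psi> (x - y) - \<psi> x)))"
  define a where "a = (\<lambda>y::real. indicator {0..D} y * y powr (-\<omega>))"
  define b where "b = (\<lambda>y::real. indicator {D..} y * y powr (-1-\<omega>))"
  have RHS: "P * (1/(1-\<omega>) + pi/\<omega>) / D powr \<omega> = P / D * (D powr (1-\<omega>) / (1-\<omega>)) + P * pi * (D powr (-\<omega>) / \<omega>)"
    using assms by (simp add: powr_diff powr_minus field_simps)
  have pw: "ennreal (norm (F y)) \<le> ennreal (P / D * a y) + ennreal (P * pi * b y)" for y
  proof -
    have "norm (F y) \<le> P / D * a y + P * pi * b y"
    proof (cases "0 < y")
      case False then show ?thesis using assms by (simp add: F_def a_def b_def indicator_def)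
    next
      case True
      have yp: "y powr (1 + \<omega>) = y * y powr \<omega>" using True by (subst powr_add) simp
      have nF: "norm (F y) = P / y powr (1 + \<omega>) * \<bar>\<psi> (x - y) - \<psi> x\<bar>"
        using True assms by (simp add: F_def abs_mult)
      show ?thesis
      proof (cases "y \<le> D")
        case True2: True
        have "norm (F y) \<le> P / y powr (1 + \<omega>) * (y / D)"
          unfolding nF using lip[of "x-y" x] True assms by (intro mult_left_mono) auto
        also have "\<dots> = P / D * y powr (-\<omega>)" using True assms yp by (simp add: powr_minus field_simps)
        also have "\<dots> \<le> P / D * a y + P * pi * b y"
          using True True2 assms by (simp add: a_def b_def indicator_def)
        finally show ?thesis .
      next
        case False
        have "norm (F y) \<le> P / y powr (1 + \<omega>) * pi"
          unfolding nF using bd[of "x-y" x] True assms by (intro mult_left_mono) auto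
        also have "\<dots> = P * pi * y powr (-1-\<omega>)"
        proof -
          have "y powr (-1-\<omega>) = inverse (y powr (1 + \<omega>))"
            using powr_minus[of y "1+\<omega>"] by (simp add: algebra_simps)
          then show ?thesis by (simp add: field_simps)
        qed
        also have "\<dots> \<le> P / D * a y + P * pi * b y"
          using True False assms by (simp add: a_def b_def indicator_def)
        finally show ?thesis .
      qed
    qed
    moreover have "0 \<le> P / D * a y" "0 \<le> P * pi * b y" using assms
      by (auto simp: a_def b_def indicator_def)
    ultimately show ?thesis by (simp add: ennreal_plus[symmetric] del: ennreal_plus)
  qed
  have I1a: "(\<integral>\<^sup>+y. ennreal (P / D * a y) \<partial>lborel) = (\<integral>\<^sup>+y. ennreal (P / D) * ennreal (a y) \<partial>lborel)"
    using assms by (intro nn_integral_cong ennreal_mult) (auto simp: a_def)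
  have I1b: "(\<integral>\<^sup>+y. ennreal (P / D) * ennreal (a y) \<partial>lborel) = ennreal (P / D) * ennreal (D powr (1-\<omega>) / (1-\<omega>))"
    using nn_powr0[OF assms(1-3)] by (subst nn_integral_cmult) (auto simp: a_def)
  have I2a: "(\<integral>\<^sup>+y. ennreal (P * pi * b y) \<partial>lborel) = (\<integral>\<^sup>+y. ennreal (P * pi) * ennreal (b y) \<partial>lborel)"
    using assms by (intro nn_integral_cong ennreal_mult) (auto simp: b_def)
  have I2b: "(\<integral>\<^sup>+y. ennreal (P * pi) * ennreal (b y) \<partial>lborel) = ennreal (P * pi) * ennreal (D powr (-\<omega>) / \<omega>)"
    using nn_powrinf[OF assms(1,2)] by (subst nn_integral_cmult) (auto simp: b_def)
  have "(\<integral>\<^sup>+y. norm (F y) \<partial>lborel) \<le> (\<integral>\<^sup>+y. ennreal (P / D * a y) + ennreal (P * pi * b y) \<partial>lborel)"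
    by (intro nn_integral_mono pw)
  also have "\<dots> = (\<integral>\<^sup>+y. ennreal (P / D * a y) \<partial>lborel) + (\<integral>\<^sup>+y. ennreal (P * pi * b y) \<partial>lborel)"
    by (rule nn_integral_add) (auto simp: a_def b_def)
  also have "\<dots> = ennreal (P / D) * ennreal (D powr (1-\<omega>) / (1-\<omega>)) + ennreal (P * pi) * ennreal (D powr (-\<omega>) / \<omega>)"
    using I1a I1b I2a I2b by simp
  also have "\<dots> = ennreal (P * (1/(1-\<omega>) + pi/\<omega>) / D powr \<omega>)"
  proof -
    have e1: "ennreal (P / D) * ennreal (D powr (1-\<omega>) / (1-\<omega>)) = ennreal (P / D * (D powr (1-\<omega>) / (1-\<omega>)))"
      using assms by (intro ennreal_mult[symmetric]) auto
    have e2: "ennreal (P * pi) * ennreal (D powr (-\<omega>) / \<omega>) = ennreal (P * pi * (D powr (-\<omega>) / \<omega>))"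
      using assms by (intro ennreal_mult[symmetric]) auto
    show ?thesis unfolding RHS e1 e2 using assms by (intro ennreal_plus[symmetric]) auto
  qed
  finally have nn: "(\<integral>\<^sup>+y. norm (F y) \<partial>lborel) \<le> ennreal (P * (1/(1-\<omega>) + pi/\<omega>) / D powr \<omega>)" .
  have R0: "0 \<le> P * (1/(1-\<omega>) + pi/\<omega>) / D powr \<omega>" using assms by simp
  show ?thesis
  proof (cases "integrable lborel F")
    case True
    have "ennreal (norm (integral\<^sup>L lborel F)) \<le> ennreal (P * (1/(1-\<omega>) + pi/\<omega>) / D powr \<omega>)"
      using integral_norm_bound_ennreal[OF True] nn by (rule order_trans)
    then show ?thesis using R0 by (simp add: set_lebesgue_integral_def F_def)
  next
    case False
    then show ?thesis using R0 by (simp add: set_lebesgue_integral_def F_def not_integrable_integral_eq)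
  qed
qed

lemma integral_abs_bound_prob:
  fixes g :: "'a \<Rightarrow> real"
  assumes "\<And>x. x \<in> space M \<Longrightarrow> \<bar>g x\<bar> \<le> B" "emeasure M (space M) = 1" "0 \<le> B"
  shows "\<bar>integral\<^sup>L M g\<bar> \<le> B"
proof (cases "integrable M g")
  case True
  have "(\<integral>\<^sup>+x. norm (g x) \<partial>M) \<le> (\<integral>\<^sup>+x. ennreal B \<partial>M)"
    using assms(1) by (intro nn_integral_mono) (auto intro: ennreal_leI)
  also have "\<dots> = ennreal B" using assms by simp
  finally have "ennreal (norm (integral\<^sup>L M g)) \<le> ennreal B"
    using integral_norm_bound_ennreal[OF True] by (rule order_trans[rotated])
  then show ?thesis using assms(3) by simp
next
  case False then show ?thesis using assms(3) by (simp add: not_integrable_integral_eq)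
qed

lemma interval_abs_bound:
  fixes H :: "real \<Rightarrow> real"
  assumes "0 \<le> t" "\<And>s. s \<in> {0..t} \<Longrightarrow> \<bar>H s\<bar> \<le> B" "0 \<le> B"
  shows "\<bar>LBINT s=0..t. H s\<bar> \<le> B * t"
proof -
  have eq: "(LBINT s=0..t. H s) = integral\<^sup>L lborel (\<lambda>s. indicator {0..t} s * H s)"
    using interval_integral_Icc[of 0 t H] assms(1) by (simp add: zero_ereal_def set_lebesgue_integral_def)
  show ?thesis
  proof (cases "integrable lborel (\<lambda>s. indicator {0..t} s * H s)")
    case True
    have "(\<integral>\<^sup>+s. norm (indicator {0..t} s * H s) \<partial>lborel) \<le> (\<integral>\<^sup>+s. ennreal B * indicator {0..t} s \<partial>lborel)"
      using assms(2,3) by (intro nn_integral_mono) (auto simp: indicator_def)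
    also have "\<dots> = ennreal B * ennreal t" using assms by (simp add: nn_integral_cmult_indicator)
    also have "\<dots> = ennreal (B * t)" using assms by (simp add: ennreal_mult)
    finally have "ennreal (norm (integral\<^sup>L lborel (\<lambda>s. indicator {0..t} s * H s))) \<le> ennreal (B * t)"
      using integral_norm_bound_ennreal[OF True] by (rule order_trans[rotated])
    then show ?thesis using assms by (simp add: eq)
  next
    case False then show ?thesis using assms by (simp add: eq not_integrable_integral_eq)
  qed
qed

lemma Cb1_arctan: assumes "0 < D" shows "Cb1 (\<lambda>x. arctan ((A - x) / D))"
  unfolding Cb1_def
proof (intro exI conjI allI)
  show "((\<lambda>x. arctan ((A - x) / D)) has_real_derivative inverse (1 + ((A - x) / D)\<^sup>2) * (- 1 / D)) (at x)" for x
  proof -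
    have "((\<lambda>x. (A - x) / D) has_real_derivative (-1 / D)) (at x)"
      using assms by (auto intro!: derivative_eq_intros)
    from DERIV_chain2[OF DERIV_arctan this] show ?thesis by simp
  qed
  show "continuous_on UNIV (\<lambda>x. inverse (1 + ((A - x) / D)\<^sup>2) * (- 1 / D))"
    using assms by (intro continuous_intros) (auto simp: add_nonneg_eq_0_iff)
  show "bounded (range (\<lambda>x. arctan ((A - x) / D)))"
  proof -
    have "\<bar>arctan ((A - x) / D)\<bar> \<le> pi" for x
      using arctan_bounded[of "(A - x) / D"] pi_gt_zero by linarith
    then show ?thesis unfolding bounded_real by blast
  qed
  have "\<bar>inverse (1 + ((A - x) / D)\<^sup>2) * (- 1 / D)\<bar> \<le> 1 / D" for x
  proof -
    have "inverse (1 + ((A - x) / D)\<^sup>2) \<le> 1" by (simp add: inverse_le_1_iff add_pos_nonneg)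
    moreover have "0 \<le> inverse (1 + ((A - x) / D)\<^sup>2)" by (simp add: add_pos_nonneg)
    ultimately show ?thesis using assms by (simp add: abs_mult divide_right_mono)
  qed
  then show "bounded (range (\<lambda>x. inverse (1 + ((A - x) / D)\<^sup>2) * (- 1 / D)))"
    unfolding bounded_real by blast
qed

lemma test_bound:
  fixes f :: "real \<Rightarrow> real measure"
  assumes om: "0 < \<omega>" "\<omega> < 1" and P: "0 < P" and D: "0 < D"
    and hyp: "\<forall>\<psi>. Cb1 \<psi> \<longrightarrow> (\<forall>t\<in>{0..T}.
          (\<integral>x. \<psi> x \<partial>(f t)) = \<psi> A +
            (LBINT s=0..t. (\<integral>x. (LBINT y:{0<..}. P / y powr (1 + \<omega>) * (\<psi> (x - y) - \<psi> x)) \<partial>(f s))))"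
    and sets: "\<forall>t\<in>{0..T}. sets (f t) = sets borel"
    and prob: "\<forall>t\<in>{0..T}. emeasure (f t) UNIV = 1"
    and t: "t \<in> {0..T}"
  shows "(\<integral>x. arctan ((A - x) / D) \<partial>(f t)) \<le> P * (1/(1-\<omega>) + pi/\<omega>) / D powr \<omega> * t"
proof -
  define \<psi> where "\<psi> = (\<lambda>x. arctan ((A - x) / D))"
  define B where "B = P * (1/(1-\<omega>) + pi/\<omega>) / D powr \<omega>"
  have B0: "0 \<le> B" using om P D by (simp add: B_def)
  have lip: "\<bar>\<psi> a - \<psi> b\<bar> \<le> \<bar>a - b\<bar> / D" for a b
  proof -
    have "\<bar>\<psi> a - \<psi> b\<bar> \<le> \<bar>(A - a) / D - (A - b) / D\<bar>" unfolding \<psi>_def by (rule arctan_lip)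
    also have "\<dots> = \<bar>a - b\<bar> / D" using D by (simp add: diff_divide_distrib[symmetric] abs_minus_commute)
    finally show ?thesis .
  qed
  have bd: "\<bar>\<psi> a - \<psi> b\<bar> \<le> pi" for a b
    using arctan_bounded[of "(A - a) / D"] arctan_bounded[of "(A - b) / D"] unfolding \<psi>_def by linarith
  have eq: "(\<integral>x. \<psi> x \<partial>(f t)) = \<psi> A +
            (LBINT s=0..t. (\<integral>x. (LBINT y:{0<..}. P / y powr (1 + \<omega>) * (\<psi> (x - y) - \<psi> x)) \<partial>(f s)))"
    using hyp Cb1_arctan[OF D, of A] t unfolding \<psi>_def by blast
  have "\<bar>LBINT s=0..t. (\<integral>x. (LBINT y:{0<..}. P / y powr (1 + \<omega>) * (\<psi> (x - y) - \<psi> x)) \<partial>(f s))\<bar> \<le> B * t"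
  proof (rule interval_abs_bound)
    show "0 \<le> t" using t by simp
    show "0 \<le> B" by (rule B0)
    fix s assume s: "s \<in> {0..t}"
    then have sT: "s \<in> {0..T}" using t by auto
    have sp: "space (f s) = UNIV" using sets sT sets_eq_imp_space_eq[of "f s" borel] by simp
    show "\<bar>\<integral>x. (LBINT y:{0<..}. P / y powr (1 + \<omega>) * (\<psi> (x - y) - \<psi> x)) \<partial>(f s)\<bar> \<le> B"
      using inner_bound[OF D om P lip bd] prob sT sp B0 unfolding B_def
      by (intro integral_abs_bound_prob) auto
  qed
  moreover have "\<psi> A = 0" by (simp add: \<psi>_def)
  ultimately show ?thesis using eq unfolding \<psi>_def B_def by linarith
qed

lemma conv_bound:
  fixes M :: "real measure" and \<phi> w b :: "real \<Rightarrow> real"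
  assumes sM: "sets M = sets borel" and pM: "emeasure M UNIV = 1"
    and \<phi>m[measurable]: "\<phi> \<in> borel_measurable borel" and \<phi>0: "\<And>x. 0 \<le> \<phi> x" and \<phi>B: "\<And>x. \<phi> x \<le> \<Phi>"
    and wm[measurable]: "w \<in> borel_measurable borel" and w0: "\<And>x. 0 \<le> w x"
    and S[measurable]: "S \<in> sets borel"
    and bi: "integrable M b" and b0: "AE y in M. 0 \<le> b y"
    and bb: "AE y in M. (\<integral>\<^sup>+x. ennreal (indicator S x * w x * \<phi> (x - y)) \<partial>lborel) \<le> ennreal (b y)"
  shows "(LBINT x:S. w x * conv_meas M \<phi> x) \<le> integral\<^sup>L M b"
proof -
  have sp: "space M = UNIV" using sets_eq_imp_space_eq[OF sM] by simp
  interpret finite_measure M by (rule finite_measureI) (simp add: sp pM)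
  have mcong: "borel_measurable M = borel_measurable borel" by (rule measurable_cong_sets[OF sM refl])
  have Ib0: "0 \<le> integral\<^sup>L M b" by (rule integral_nonneg_AE[OF b0])
  define H where "H = (\<lambda>x. indicator S x * (w x * conv_meas M \<phi> x))"
  have LH: "(LBINT x:S. w x * conv_meas M \<phi> x) = integral\<^sup>L lborel H"
    by (simp add: set_lebesgue_integral_def H_def)
  show ?thesis
  proof (cases "integrable lborel H")
    case False then show ?thesis using Ib0 by (simp add: LH not_integrable_integral_eq)
  next
    case True
    have int_y: "integrable M (\<lambda>y. c * \<phi> (x - y))" for c x
    proof (rule integrable_const_bound[where B="\<bar>c\<bar> * \<Phi>"])
      show "AE y in M. norm (c * \<phi> (x - y)) \<le> \<bar>c\<bar> * \<Phi>"
        using \<phi>0 \<phi>B by (auto simp: abs_mult intro!: mult_left_mono)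
      show "(\<lambda>y. c * \<phi> (x - y)) \<in> borel_measurable M" unfolding mcong by measurable
    qed
    have Hnn: "0 \<le> H x" for x
      unfolding H_def conv_meas_def using w0 \<phi>0 by (auto intro!: integral_nonneg_AE mult_nonneg_nonneg)
    have Hx: "ennreal (H x) = (\<integral>\<^sup>+y. ennreal (indicator S x * w x * \<phi> (x - y)) \<partial>M)" for x
    proof -
      have "H x = (\<integral>y. indicator S x * w x * \<phi> (x - y) \<partial>M)"
        unfolding H_def conv_meas_def by (simp add: mult.assoc)
      then show ?thesis
        using nn_integral_eq_integral[OF int_y[of "indicator S x * w x" x]] w0 \<phi>0
        by (simp add: indicator_def)
    qed
    have pmeas: "(\<lambda>(x, y). ennreal (indicator S x * w x * \<phi> (x - y))) \<in> borel_measurable (lborel \<Otimes>\<^sub>M M)"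
    proof -
      have eq: "borel_measurable (lborel \<Otimes>\<^sub>M M) = borel_measurable (lborel \<Otimes>\<^sub>M borel)"
        by (rule measurable_cong_sets[OF sets_pair_measure_cong[OF refl sM] refl])
      show ?thesis unfolding eq by measurable
    qed
    interpret pair_sigma_finite lborel M
      by (intro pair_sigma_finite.intro lborel.sigma_finite_measure_axioms sigma_finite_measure_axioms)
    have "(\<integral>\<^sup>+x. ennreal (H x) \<partial>lborel) = (\<integral>\<^sup>+x. (\<integral>\<^sup>+y. ennreal (indicator S x * w x * \<phi> (x - y)) \<partial>M) \<partial>lborel)"
      by (simp add: Hx)
    also have "\<dots> = (\<integral>\<^sup>+y. (\<integral>\<^sup>+x. ennreal (indicator S x * w x * \<phi> (x - y)) \<partial>lborel) \<partial>M)"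
      using Fubini'[OF pmeas] by simp
    also have "\<dots> \<le> (\<integral>\<^sup>+y. ennreal (b y) \<partial>M)"
      by (rule nn_integral_mono_AE[OF bb])
    also have "\<dots> = ennreal (integral\<^sup>L M b)"
      by (rule nn_integral_eq_integral[OF bi b0])
    finally have le: "(\<integral>\<^sup>+x. ennreal (H x) \<partial>lborel) \<le> ennreal (integral\<^sup>L M b)" .
    have "integral\<^sup>L lborel H = enn2real (\<integral>\<^sup>+x. ennreal (H x) \<partial>lborel)"
      using True Hnn by (intro integral_eq_nn_integral) auto
    also have "\<dots> \<le> enn2real (ennreal (integral\<^sup>L M b))"
      by (rule enn2real_mono[OF le]) simp
    also have "\<dots> = integral\<^sup>L M b" using Ib0 by simp
    finally show ?thesis by (simp add: LH)
  qed
qed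

lemma moll_facts:
  assumes m: "mollifier \<kappa> \<phi>"
  shows "\<phi> \<in> borel_measurable borel" "\<exists>\<Phi>. \<forall>x. \<phi> x \<le> \<Phi>"
    "\<And>y. (\<integral>\<^sup>+x. ennreal (\<phi> (x - y)) \<partial>lborel) = 1"
    "\<And>x. 0 \<le> \<phi> x" "\<And>x. \<bar>x\<bar> > \<kappa> \<Longrightarrow> \<phi> x = 0"
proof -
  have d: "\<phi> differentiable (at x)" for x
  proof -
    have "(deriv ^^ 0) \<phi> differentiable (at x)" using m unfolding mollifier_def by blast
    then show ?thesis by simp
  qed
  have c: "continuous_on UNIV \<phi>"
    using d by (simp add: continuous_at_imp_continuous_on differentiable_imp_continuous_within)
  then show bm: "\<phi> \<in> borel_measurable borel" by (rule borel_measurable_continuous_onI)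
  show nn: "\<And>x. 0 \<le> \<phi> x" and z: "\<And>x. \<bar>x\<bar> > \<kappa> \<Longrightarrow> \<phi> x = 0"
    using m unfolding mollifier_def by auto
  have "compact (\<phi> ` {-\<kappa>..\<kappa>})"
    by (rule compact_continuous_image[OF continuous_on_subset[OF c] compact_Icc]) simp
  then have "bounded (\<phi> ` {-\<kappa>..\<kappa>})" by (rule compact_imp_bounded)
  then obtain a where a0: "\<forall>z\<in>\<phi> ` {-\<kappa>..\<kappa>}. \<bar>z\<bar> \<le> a" unfolding bounded_real by blast
  then have a: "\<And>x. x \<in> {-\<kappa>..\<kappa>} \<Longrightarrow> \<bar>\<phi> x\<bar> \<le> a" by blast
  have "\<phi> x \<le> max a 0" for x
  proof (cases "\<bar>x\<bar> > \<kappa>")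
    case True then show ?thesis using z by simp
  next
    case False then have "x \<in> {-\<kappa>..\<kappa>}" by auto
    then show ?thesis using a[of x] by linarith
  qed
  then show "\<exists>\<Phi>. \<forall>x. \<phi> x \<le> \<Phi>" by blast
  fix y
  have "(\<integral>\<^sup>+x. ennreal (\<phi> (x - y)) \<partial>lborel) = (\<integral>\<^sup>+x. ennreal (\<phi> x) \<partial>lborel)"
  proof -
    note bm[measurable]
    have "(\<lambda>x. ennreal (\<phi> (x - y))) \<in> borel_measurable borel" by measurable
    from nn_integral_real_affine[OF this, of 1 y] show ?thesis by simp
  qed
  also have "\<dots> = ennreal (\<integral>x. \<phi> x \<partial>lborel)"
    using m nn unfolding mollifier_def by (intro nn_integral_eq_integral) auto
  also have "\<dots> = 1" using m unfolding mollifier_def by simp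
  finally show "(\<integral>\<^sup>+x. ennreal (\<phi> (x - y)) \<partial>lborel) = 1" .
qed

lemma pw1:
  assumes m: "mollifier \<kappa> \<phi>"
  shows "(\<integral>\<^sup>+x. ennreal (indicator {..A - D} x * \<phi> (x - y)) \<partial>lborel) \<le> ennreal (indicator {..A - D + \<kappa>} y)"
proof (cases "y \<le> A - D + \<kappa>")
  case True
  have "(\<integral>\<^sup>+x. ennreal (indicator {..A - D} x * \<phi> (x - y)) \<partial>lborel) \<le> (\<integral>\<^sup>+x. ennreal (\<phi> (x - y)) \<partial>lborel)"
    using moll_facts(4)[OF m] by (intro nn_integral_mono) (auto simp: indicator_def)
  then show ?thesis using True moll_facts(3)[OF m] by simp
next
  case False
  have "ennreal (indicator {..A - D} x * \<phi> (x - y)) = 0" for x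
    using False moll_facts(5)[OF m, of "x - y"] by (auto simp: indicator_def)
  then show ?thesis by simp
qed

lemma pw2:
  assumes m: "mollifier \<kappa> \<phi>" and k: "0 < \<kappa>" "\<kappa> < 1" and y: "y \<le> A"
    and lower: "\<And>u. 0 \<le> u \<Longrightarrow> u \<le> (1 + u\<^sup>2) * arctan u"
  shows "(\<integral>\<^sup>+x. ennreal (indicator {A - 2..A} x * \<bar>x - A\<bar> * \<phi> (x - y)) \<partial>lborel) \<le> ennreal (\<kappa> + 10 * arctan (A - y))"
proof (cases "A - y \<le> 3")
  case True
  have pt: "ennreal (indicator {A - 2..A} x * \<bar>x - A\<bar> * \<phi> (x - y)) \<le> ennreal (A - y + \<kappa>) * ennreal (\<phi> (x - y))" for x
  proof (cases "\<phi> (x - y) = 0 \<or> x \<notin> {A - 2..A}")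
    case True then show ?thesis by (auto simp: indicator_def)
  next
    case False
    then have "\<bar>x - y\<bar> \<le> \<kappa>" "x \<le> A" using moll_facts(5)[OF m, of "x - y"] by force+
    then have "indicator {A - 2..A} x * \<bar>x - A\<bar> * \<phi> (x - y) \<le> (A - y + \<kappa>) * \<phi> (x - y)"
      using moll_facts(4)[OF m, of "x-y"] by (auto simp: indicator_def intro!: mult_right_mono)
    moreover have "ennreal ((A - y + \<kappa>) * \<phi> (x - y)) = ennreal (A - y + \<kappa>) * ennreal (\<phi> (x - y))"
      using y k moll_facts(4)[OF m, of "x-y"] by (intro ennreal_mult) auto
    ultimately show ?thesis by (metis ennreal_leI)
  qed
  have "(\<integral>\<^sup>+x. ennreal (indicator {A - 2..A} x * \<bar>x - A\<bar> * \<phi> (x - y)) \<partial>lborel) \<le> (\<integral>\<^sup>+x. ennreal (A - y + \<kappa>) * ennreal (\<phi> (x - y)) \<partial>lborel)"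
    by (intro nn_integral_mono pt)
  also have "\<dots> = ennreal (A - y + \<kappa>)"
  proof -
    note moll_facts(1)[OF m, measurable]
    show ?thesis by (subst nn_integral_cmult) (auto simp: moll_facts(3)[OF m])
  qed
  also have "\<dots> \<le> ennreal (\<kappa> + 10 * arctan (A - y))"
  proof (intro ennreal_leI)
    have "A - y \<le> (1 + (A - y)\<^sup>2) * arctan (A - y)" using lower[of "A - y"] y by simp
    also have "\<dots> \<le> 10 * arctan (A - y)"
    proof (rule mult_right_mono)
      have "(A - y)\<^sup>2 \<le> 3\<^sup>2" using True y by (intro power_mono) auto
      then show "1 + (A - y)\<^sup>2 \<le> 10" by simp
    qed (use y in simp)
    finally show "A - y + \<kappa> \<le> \<kappa> + 10 * arctan (A - y)" by simp
  qed
  finally show ?thesis .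
next
  case False
  have "ennreal (indicator {A - 2..A} x * \<bar>x - A\<bar> * \<phi> (x - y)) = 0" for x
    using False k moll_facts(5)[OF m, of "x - y"] by (auto simp: indicator_def)
  then show ?thesis by simp
qed

theorem lemmaB10:
  fixes \<omega> \<mu> :: real
  assumes "0 < \<omega>" "\<omega> < 1" "0 < \<mu>" "\<mu> < 1"
  shows "\<exists>C C\<^sub>\<mu> C\<^sub>\<omega> :: real.
    \<forall>(P::real) (A::real) (\<kappa>::real) (T::real) (f :: real \<Rightarrow> real measure) (\<phi> :: real \<Rightarrow> real).
      0 < P \<longrightarrow> 0 < \<kappa> \<longrightarrow> \<kappa> < 1 \<longrightarrow> 0 < T \<longrightarrow> mollifier \<kappa> \<phi> \<longrightarrow>
      (\<forall>t\<in>{0..T}. sets (f t) = sets borel \<and> finite_measure (f t)) \<longrightarrow>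
      (\<forall>\<psi>. Cb \<psi> \<longrightarrow> continuous_on {0..T} (\<lambda>t. \<integral>x. \<psi> x \<partial>(f t))) \<longrightarrow>
      (\<forall>\<psi>. Cb1 \<psi> \<longrightarrow> (\<forall>t\<in>{0..T}.
          (\<integral>x. \<psi> x \<partial>(f t)) = \<psi> A +
            (LBINT s=0..t. (\<integral>x. (LBINT y:{0<..}. P / y powr (1 + \<omega>) * (\<psi> (x - y) - \<psi> x)) \<partial>(f s))))) \<longrightarrow>
      (\<forall>t\<in>{0..T}. emeasure (f t) {A<..} = 0 \<and> emeasure (f t) UNIV = 1) \<longrightarrow>
      (\<forall>t\<in>{0..T}.
         (\<forall>D>0. (LBINT x:{..A - D}. conv_meas (f t) \<phi> x)
                  \<le> C * (\<kappa> / D) powr \<mu> + C * (P * t / D powr \<omega>))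
       \<and> (LBINT x:{A - 2..A}. \<bar>x - A\<bar> * conv_meas (f t) \<phi> x)
                  \<le> C\<^sub>\<mu> * \<kappa> powr \<mu> + C\<^sub>\<omega> * P * t)"
proof -
  define K where "K = 1/(1-\<omega>) + pi/\<omega>"
  have K0: "0 < K" unfolding K_def using assms by (intro add_pos_pos divide_pos_pos) auto
  show ?thesis
  proof (rule exI[of _ "2 + 3*K"], rule exI[of _ 1], rule exI[of _ "10*K"], intro allI impI ballI)
    fix P A \<kappa> T :: real and f :: "real \<Rightarrow> real measure" and \<phi> :: "real \<Rightarrow> real" and t :: real
    assume P: "0 < P" and k0: "0 < \<kappa>" and k1: "\<kappa> < 1" and T: "0 < T" and m: "mollifier \<kappa> \<phi>"
      and ms: "\<forall>t\<in>{0..T}. sets (f t) = sets borel \<and> finite_measure (f t)"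
      and cont: "\<forall>\<psi>. Cb \<psi> \<longrightarrow> continuous_on {0..T} (\<lambda>t. \<integral>x. \<psi> x \<partial>(f t))"
      and hyp: "\<forall>\<psi>. Cb1 \<psi> \<longrightarrow> (\<forall>t\<in>{0..T}.
          (\<integral>x. \<psi> x \<partial>(f t)) = \<psi> A +
            (LBINT s=0..t. (\<integral>x. (LBINT y:{0<..}. P / y powr (1 + \<omega>) * (\<psi> (x - y) - \<psi> x)) \<partial>(f s))))"
      and supp: "\<forall>t\<in>{0..T}. emeasure (f t) {A<..} = 0 \<and> emeasure (f t) UNIV = 1"
      and t: "t \<in> {0..T}"
    have sets_all: "\<forall>t\<in>{0..T}. sets (f t) = sets borel" using ms by blast
    have prob_all: "\<forall>t\<in>{0..T}. emeasure (f t) UNIV = 1" using supp by blast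
    have sM: "sets (f t) = sets borel" and pM: "emeasure (f t) UNIV = 1" and nA: "emeasure (f t) {A<..} = 0"
      using ms supp t by auto
    have sp: "space (f t) = UNIV" using sets_eq_imp_space_eq[OF sM] by simp
    interpret finite_measure "f t" by (rule finite_measureI) (simp add: sp pM)
    have mcong: "borel_measurable (f t) = borel_measurable borel" by (rule measurable_cong_sets[OF sM refl])
    have measUNIV: "measure (f t) UNIV = 1" using pM by (simp add: measure_def)
    have ae: "AE x in f t. x \<le> A"
      by (rule AE_I[of _ _ "{A<..}"]) (auto simp: nA sM sp)
    have t0: "0 \<le> t" using t by simp
    have psi_int: "integrable (f t) (\<lambda>x. arctan ((A - x) / D))" for D
    proof (rule integrable_const_bound[where B=pi])
      show "AE x in f t. norm (arctan ((A - x) / D)) \<le> pi"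
      proof (intro AE_I2)
        fix x show "norm (arctan ((A - x) / D)) \<le> pi"
          using arctan_bounded[of "(A - x) / D"] pi_gt_zero unfolding real_norm_def by linarith
      qed
      show "(\<lambda>x. arctan ((A - x) / D)) \<in> borel_measurable (f t)" unfolding mcong by measurable
    qed
    have tb: "(\<integral>x. arctan ((A - x) / D) \<partial>(f t)) \<le> P * K / D powr \<omega> * t" if D: "0 < D" for D
      using test_bound[OF assms(1,2) P D hyp sets_all prob_all t] by (simp add: K_def)
    have low: "pi/4 * measure (f t) {..A - D} \<le> (\<integral>x. arctan ((A - x) / D) \<partial>(f t))" if D: "0 < D" for D
    proof -
      have "(\<integral>x. pi/4 * indicator {..A - D} x \<partial>(f t)) \<le> (\<integral>x. arctan ((A - x) / D) \<partial>(f t))"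
      proof (rule integral_mono_AE[OF _ psi_int])
        show "integrable (f t) (\<lambda>x. pi/4 * indicator {..A - D} x)"
          by (intro integrable_mult_right integrable_real_indicator) (auto simp: sM emeasure_finite less_top[symmetric])
        show "AE x in f t. pi/4 * indicator {..A - D} x \<le> arctan ((A - x) / D)"
          using ae
        proof eventually_elim
          case (elim x)
          show ?case
          proof (cases "x \<le> A - D")
            case True
            then have "1 \<le> (A - x) / D" using D by (simp add: field_simps)
            then have "arctan 1 \<le> arctan ((A - x) / D)" by (rule arctan_monotone')
            then show ?thesis using True by (simp add: arctan_one)
          next
            case False
            have "0 \<le> (A - x) / D" using elim D by simp
            then show ?thesis using False by simp
          qed
        qed
      qed
      then show ?thesis by (simp add: sp)
    qed
    have measb: "measure (f t) {..A - D} \<le> 4 / pi * (P * K / D powr \<omega> * t)" if D: "0 < D" for D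
    proof -
      have h: "pi/4 * measure (f t) {..A - D} \<le> P * K / D powr \<omega> * t" using low[OF D] tb[OF D] by linarith
      have "measure (f t) {..A - D} = 4/pi * (pi/4 * measure (f t) {..A - D})" by simp
      also have "\<dots> \<le> 4/pi * (P * K / D powr \<omega> * t)" using h by (intro mult_left_mono) auto
      finally show ?thesis .
    qed
    obtain \<Phi> where \<Phi>: "\<And>x. \<phi> x \<le> \<Phi>" using moll_facts(2)[OF m] by blast
    show "(\<forall>D>0. (LBINT x:{..A - D}. conv_meas (f t) \<phi> x)
                  \<le> (2 + 3*K) * (\<kappa> / D) powr \<mu> + (2 + 3*K) * (P * t / D powr \<omega>))
       \<and> (LBINT x:{A - 2..A}. \<bar>x - A\<bar> * conv_meas (f t) \<phi> x)
                  \<le> 1 * \<kappa> powr \<mu> + 10*K * P * t"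
    proof (intro conjI allI impI)
      fix D :: real assume D: "0 < D"
      have "(LBINT x:{..A - D}. 1 * conv_meas (f t) \<phi> x) \<le> (\<integral>y. indicator {..A - D + \<kappa>} y \<partial>(f t))"
        by (rule conv_bound[OF sM pM moll_facts(1)[OF m] moll_facts(4)[OF m] \<Phi>])
           (auto simp: sM emeasure_finite less_top[symmetric] intro!: integrable_real_indicator AE_I2 pw1[OF m])
      then have c1: "(LBINT x:{..A - D}. conv_meas (f t) \<phi> x) \<le> measure (f t) {..A - D + \<kappa>}"
        by (simp add: sp)
      have nn1: "0 \<le> (2 + 3*K) * (\<kappa> / D) powr \<mu>" and nn2: "0 \<le> (2 + 3*K) * (P * t / D powr \<omega>)"
        using K0 P t0 by auto
      show "(LBINT x:{..A - D}. conv_meas (f t) \<phi> x)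
                  \<le> (2 + 3*K) * (\<kappa> / D) powr \<mu> + (2 + 3*K) * (P * t / D powr \<omega>)"
      proof (cases "2 * \<kappa> \<le> D")
        case True
        have "measure (f t) {..A - D + \<kappa>} \<le> measure (f t) {..A - D/2}"
          using True by (intro finite_measure_mono) (auto simp: sM)
        also have "\<dots> \<le> 4 / pi * (P * K / (D/2) powr \<omega> * t)" using measb[of "D/2"] D by simp
        also have "\<dots> = (4 / pi * 2 powr \<omega>) * K * (P * t / D powr \<omega>)"
          by (simp add: powr_divide field_simps)
        also have "\<dots> \<le> 3 * K * (P * t / D powr \<omega>)"
        proof (rule mult_right_mono[OF mult_right_mono])
          have "2 powr \<omega> \<le> 2 powr 1" using assms by (intro powr_mono) auto
          then have "4 / pi * 2 powr \<omega> \<le> 8 / pi" using pi_gt_zero by (simp add: field_simps)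
          also have "\<dots> \<le> 3" using pi_gt3 by (simp add: field_simps)
          finally show "4 / pi * 2 powr \<omega> \<le> 3" .
        qed (use K0 P t0 in auto)
        also have "\<dots> \<le> (2 + 3*K) * (\<kappa> / D) powr \<mu> + (2 + 3*K) * (P * t / D powr \<omega>)"
        proof -
          have X0: "0 \<le> P * t / D powr \<omega>" using P t0 by simp
          have "3 * K * (P * t / D powr \<omega>) \<le> (2 + 3*K) * (P * t / D powr \<omega>)"
            using X0 by (intro mult_right_mono) auto
          then show ?thesis using nn1 by linarith
        qed
        finally show ?thesis using c1 by linarith
      next
        case False
        have "measure (f t) {..A - D + \<kappa>} \<le> measure (f t) UNIV"
          by (intro finite_measure_mono) (auto simp: sM)
        also have "\<dots> = 1" by (rule measUNIV)
        also have "1 \<le> 2 * (\<kappa> / D) powr \<mu>"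
        proof -
          have "(1/2) powr 1 \<le> (1/2) powr \<mu>" using assms by (intro powr_mono') auto
          also have "\<dots> \<le> (\<kappa> / D) powr \<mu>" using False D assms by (intro powr_mono2) (auto simp: field_simps)
          finally show ?thesis by simp
        qed
        also have "\<dots> \<le> (2 + 3*K) * (\<kappa> / D) powr \<mu> + (2 + 3*K) * (P * t / D powr \<omega>)"
        proof -
          have "2 * (\<kappa> / D) powr \<mu> \<le> (2 + 3*K) * (\<kappa> / D) powr \<mu>"
            using K0 by (intro mult_right_mono) auto
          then show ?thesis using nn2 by linarith
        qed
        finally show ?thesis using c1 by linarith
      qed
    next
      have bint: "integrable (f t) (\<lambda>y. \<kappa> + 10 * arctan ((A - y) / 1))"
        using psi_int[of 1] by auto
      have "(LBINT x:{A - 2..A}. \<bar>x - A\<bar> * conv_meas (f t) \<phi> x) \<le> (\<integral>y. \<kappa> + 10 * arctan ((A - y) / 1) \<partial>(f t))"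
      proof (rule conv_bound[OF sM pM moll_facts(1)[OF m] moll_facts(4)[OF m] \<Phi> _ _ _ bint])
        show "AE y in f t. 0 \<le> \<kappa> + 10 * arctan ((A - y) / 1)"
          using ae by eventually_elim (use k0 in simp)
        show "AE y in f t. (\<integral>\<^sup>+x. ennreal (indicator {A - 2..A} x * \<bar>x - A\<bar> * \<phi> (x - y)) \<partial>lborel) \<le> ennreal (\<kappa> + 10 * arctan ((A - y) / 1))"
          using ae by eventually_elim (use pw2[OF m k0 k1 _ arctan_lower] in simp)
      qed auto
      also have "\<dots> = \<kappa> + 10 * (\<integral>y. arctan ((A - y) / 1) \<partial>(f t))"
        using psi_int[of 1] by (simp add: measUNIV sp)
      also have "\<dots> \<le> \<kappa> + 10 * (P * K / 1 powr \<omega> * t)"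
        using tb[of 1] by simp
      also have "\<dots> \<le> 1 * \<kappa> powr \<mu> + 10*K * P * t"
      proof -
        have "\<kappa> powr 1 \<le> \<kappa> powr \<mu>" using assms k0 k1 by (intro powr_mono') auto
        then show ?thesis using k0 by simp
      qed
      finally show "(LBINT x:{A - 2..A}. \<bar>x - A\<bar> * conv_meas (f t) \<phi> x) \<le> 1 * \<kappa> powr \<mu> + 10*K * P * t" .
    qed
  qed
qed

end
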